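(* Let $T$, $\mathcal{S}=\mathcal{S}_+\cup\mathcal{S}_-$, $\Psi$, $U$, $\mu$, $P_\mu$ and $V_\mu$ be as in the context. Consider the following three discrete-time QBDs on phase space $\mathcal{S}$: (i) the QBD with blocks $\Theta_{-1}=\begin{bmatrix}0&\frac12P_{\mu+-}\\0&P_{\mu--}\end{bmatrix}$, $\Theta_0=\begin{bmatrix}\frac12P_{\mu++}&0\\P_{\mu-+}&0\end{bmatrix}$, $\Theta_1=\frac12\begin{bmatrix}I&0\\0&0\end{bmatrix}$; (ii) the QBD with blocks $B'_{-1}=\frac12\begin{bmatrix}0&P_{\mu+-}\\0&P_{\mu--}\end{bmatrix}$, $B'_0=\frac12\begin{bmatrix}P_{\mu++}&0\\P_{\mu-+}&I\end{bmatrix}$, $B'_1=\frac12\begin{bmatrix}I&0\\0&0\end{bmatrix}$; (iii) the QBD with blocks $B_{-1}=\begin{bmatrix}0&(I-\mu^{-1}T_{++})^{-1}P_{\mu+-}\\0&V_\mu\end{bmatrix}$, $B_0=0$, $B_1=\begin{bmatrix}(I-\mu^{-1}T_{++})^{-1}&0\\0&0\end{bmatrix}$. Then the QBD in (ii) has the same $\mathcal{G}$-matrix as the QBD in (i) and the same $\mathcal{G}$-matrix as the QBD in (iii).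
   Context: $T$ is the generator of a continuous-time Markov chain on a finite set $\mathcal{S}=\mathcal{S}_+\cup\mathcal{S}_-$ (disjoint, both nonempty), partitioned into blocks $T_{++},T_{+-},T_{-+},T_{--}$ according to $\mathcal{S}_\pm$. $\Psi$ is the minimal nonnegative solution of $T_{+-}+\Psi T_{--}+T_{++}\Psi+\Psi T_{-+}\Psi=0$ (the first-return probability matrix of the unit-rate fluid queue with phase generator $T$, rates $+1$ on $\mathcal{S}_+$ and $-1$ on $\mathcal{S}_-$), and $U:=T_{--}+T_{-+}\Psi$. $\mu>0$ satisfies $\mu\ge\max_i|T_{ii}|$; $P_\mu:=I+\mu^{-1}T$ with blocks $P_{\mu++}$ etc., and $V_\mu:=I+\mu^{-1}U$. A discrete-time quasi-birth-death process (QBD) with transition blocks $L_{-1},L_0,L_1$ is a Markov chain $\{(Y_n,\kappa_n)\}$ on $\mathbb{Z}\times\mathcal{S}$ with $\mathbb{P}[Y_n=k+d,\kappa_n=j\mid Y_{n-1}=k,\kappa_{n-1}=i]=(L_d)_{ij}$ for $d\in\{-1,0,1\}$. Its $\mathcal{G}$-matrix has entries $\mathcal{G}_{ij}=\mathbb{P}[\theta<\infty,\kappa_\theta=j\mid Y_0=k,\kappa_0=i]$ with $\theta=\inf\{n>0:Y_n=k-1\}$. Matrices are partitioned into blocks according to $\mathcal{S}_+,\mathcal{S}_-$. *)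

theory Defs
  imports Complex_Main
begin

text \<open>Phase space S = S_+ \<union> S_- is modelled as the disjoint sum type 'p + 'm
  (Inl = phases in S_+, Inr = phases in S_-), both finite (and nonempty, as all types are).\<close>

definition mmul :: "('a \<Rightarrow> 'b::finite \<Rightarrow> real) \<Rightarrow> ('b \<Rightarrow> 'c \<Rightarrow> real) \<Rightarrow> 'a \<Rightarrow> 'c \<Rightarrow> real" where
  "mmul A B = (\<lambda>i k. \<Sum>j\<in>UNIV. A i j * B j k)"

definition idm :: "'a \<Rightarrow> 'a \<Rightarrow> real" where
  "idm = (\<lambda>i j. if i = j then 1 else 0)"

definition zm :: "'a \<Rightarrow> 'b \<Rightarrow> real" where
  "zm = (\<lambda>i j. 0)"

definition minv :: "('a::finite \<Rightarrow> 'a \<Rightarrow> real) \<Rightarrow> 'a \<Rightarrow> 'a \<Rightarrow> real" where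
  "minv A = (THE X. mmul A X = idm \<and> mmul X A = idm)"

definition blk :: "('p \<Rightarrow> 'p \<Rightarrow> real) \<Rightarrow> ('p \<Rightarrow> 'm \<Rightarrow> real) \<Rightarrow> ('m \<Rightarrow> 'p \<Rightarrow> real)
    \<Rightarrow> ('m \<Rightarrow> 'm \<Rightarrow> real) \<Rightarrow> ('p + 'm) \<Rightarrow> ('p + 'm) \<Rightarrow> real" where
  "blk A B C D = (\<lambda>x y. case x of
      Inl i \<Rightarrow> (case y of Inl j \<Rightarrow> A i j | Inr j \<Rightarrow> B i j)
    | Inr i \<Rightarrow> (case y of Inl j \<Rightarrow> C i j | Inr j \<Rightarrow> D i j))"

definition bpp :: "(('p + 'm) \<Rightarrow> ('p + 'm) \<Rightarrow> real) \<Rightarrow> 'p \<Rightarrow> 'p \<Rightarrow> real" where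
  "bpp M = (\<lambda>i j. M (Inl i) (Inl j))"
definition bpm :: "(('p + 'm) \<Rightarrow> ('p + 'm) \<Rightarrow> real) \<Rightarrow> 'p \<Rightarrow> 'm \<Rightarrow> real" where
  "bpm M = (\<lambda>i j. M (Inl i) (Inr j))"
definition bmp :: "(('p + 'm) \<Rightarrow> ('p + 'm) \<Rightarrow> real) \<Rightarrow> 'm \<Rightarrow> 'p \<Rightarrow> real" where
  "bmp M = (\<lambda>i j. M (Inr i) (Inl j))"
definition bmm :: "(('p + 'm) \<Rightarrow> ('p + 'm) \<Rightarrow> real) \<Rightarrow> 'm \<Rightarrow> 'm \<Rightarrow> real" where
  "bmm M = (\<lambda>i j. M (Inr i) (Inr j))"

definition is_generator :: "('s::finite \<Rightarrow> 's \<Rightarrow> real) \<Rightarrow> bool" where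
  "is_generator T \<longleftrightarrow> (\<forall>i j. i \<noteq> j \<longrightarrow> 0 \<le> T i j) \<and> (\<forall>i. (\<Sum>j\<in>UNIV. T i j) = 0)"

definition riccati :: "(('p::finite + 'm::finite) \<Rightarrow> ('p + 'm) \<Rightarrow> real) \<Rightarrow> ('p \<Rightarrow> 'm \<Rightarrow> real) \<Rightarrow> bool" where
  "riccati T X \<longleftrightarrow> (\<forall>i j. bpm T i j + mmul X (bmm T) i j + mmul (bpp T) X i j
                            + mmul (mmul X (bmp T)) X i j = 0)"

definition is_min_nonneg_sol :: "(('p::finite + 'm::finite) \<Rightarrow> ('p + 'm) \<Rightarrow> real) \<Rightarrow> ('p \<Rightarrow> 'm \<Rightarrow> real) \<Rightarrow> bool" where
  "is_min_nonneg_sol T X \<longleftrightarrow> riccati T X \<and> (\<forall>i j. 0 \<le> X i j) \<and>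
     (\<forall>Y. riccati T Y \<and> (\<forall>i j. 0 \<le> Y i j) \<longrightarrow> (\<forall>i j. X i j \<le> Y i j))"

text \<open>Discrete-time QBD with blocks Lm = L_{-1}, L0 = L_0, Lp = L_1 (level-homogeneous, so we
  start at level 0).  qbd_taboo Lm L0 Lp n k i j is the probability that, started at (0,i),
  the chain is at (k,j) at time n having stayed at levels \<ge> 0 at all times 0..n.\<close>
fun qbd_taboo :: "('s::finite \<Rightarrow> 's \<Rightarrow> real) \<Rightarrow> ('s \<Rightarrow> 's \<Rightarrow> real) \<Rightarrow> ('s \<Rightarrow> 's \<Rightarrow> real)
    \<Rightarrow> nat \<Rightarrow> int \<Rightarrow> 's \<Rightarrow> 's \<Rightarrow> real" where
  "qbd_taboo Lm L0 Lp 0 k i j = (if k = 0 \<and> i = j then 1 else 0)"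
| "qbd_taboo Lm L0 Lp (Suc n) k i j =
     (if k < 0 then 0 else
       (\<Sum>l\<in>UNIV. qbd_taboo Lm L0 Lp n (k + 1) i l * Lm l j
                 + qbd_taboo Lm L0 Lp n k i l * L0 l j
                 + qbd_taboo Lm L0 Lp n (k - 1) i l * Lp l j))"

text \<open>G-matrix: G_ij = P[theta < \<infinity>, kappa_theta = j | Y_0 = 0, kappa_0 = i], with
  theta the first passage time to level -1, written as the sum over theta = n+1 of the
  probabilities of the (disjoint) events {theta = n+1, kappa_theta = j}.\<close>
definition qbd_G :: "('s::finite \<Rightarrow> 's \<Rightarrow> real) \<Rightarrow> ('s \<Rightarrow> 's \<Rightarrow> real) \<Rightarrow> ('s \<Rightarrow> 's \<Rightarrow> real)
    \<Rightarrow> 's \<Rightarrow> 's \<Rightarrow> real" where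
  "qbd_G Lm L0 Lp = (\<lambda>i j. \<Sum>n. \<Sum>l\<in>UNIV. qbd_taboo Lm L0 Lp n 0 i l * Lm l j)"

end

theory Submission
  imports Defs
begin

lemma mle_iff: "(A::'a \<Rightarrow> 'b \<Rightarrow> real) \<le> B \<longleftrightarrow> (\<forall>i j. A i j \<le> B i j)"
  by (simp add: le_fun_def)

definition nonneg :: "('a \<Rightarrow> 'b \<Rightarrow> real) \<Rightarrow> bool" where
  "nonneg A \<longleftrightarrow> (\<forall>i j. 0 \<le> A i j)"

lemma mmul_assoc: "mmul (mmul A B) C = mmul A (mmul B C)"
proof (intro ext)
  fix i l
  have "mmul (mmul A B) C i l = (\<Sum>j\<in>UNIV. \<Sum>k\<in>UNIV. A i k * B k j * C j l)"
    by (simp add: mmul_def sum_distrib_right)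
  also have "\<dots> = (\<Sum>k\<in>UNIV. \<Sum>j\<in>UNIV. A i k * B k j * C j l)"
    by (rule sum.swap)
  also have "\<dots> = mmul A (mmul B C) i l"
    by (simp add: mmul_def sum_distrib_left mult.assoc)
  finally show "mmul (mmul A B) C i l = mmul A (mmul B C) i l" .
qed

lemma mmul_add_l[simp]: "mmul (\<lambda>i j. A i j + B i j) C i j = mmul A C i j + mmul B C i j"
  by (simp add: mmul_def distrib_right sum.distrib)
lemma mmul_add_r[simp]: "mmul C (\<lambda>i j. A i j + B i j) i j = mmul C A i j + mmul C B i j"
  by (simp add: mmul_def distrib_left sum.distrib)
lemma mmul_diff_l[simp]: "mmul (\<lambda>i j. A i j - B i j) C i j = mmul A C i j - mmul B C i j"
  by (simp add: mmul_def left_diff_distrib sum_subtractf)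
lemma mmul_diff_r[simp]: "mmul C (\<lambda>i j. A i j - B i j) i j = mmul C A i j - mmul C B i j"
  by (simp add: mmul_def right_diff_distrib sum_subtractf)
lemma mmul_div_l[simp]: "mmul (\<lambda>i j. A i j / c) C i j = mmul A C i j / c"
  by (simp add: mmul_def sum_divide_distrib)
lemma mmul_div_r[simp]: "mmul C (\<lambda>i j. A i j / c) i j = mmul C A i j / c"
  by (simp add: mmul_def sum_divide_distrib)
lemma mmul_zm_l[simp]: "mmul zm C = zm"
  by (simp add: mmul_def zm_def)
lemma mmul_zm_r[simp]: "mmul C zm = zm"
  by (simp add: mmul_def zm_def)
lemma mmul_idm_l[simp]: "mmul idm C = C"
proof (intro ext)
  fix x y
  have "mmul idm C x y = (\<Sum>j\<in>UNIV. if x = j then C j y else 0)"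
    unfolding mmul_def idm_def by (intro sum.cong) auto
  then show "mmul idm C x y = C x y" by simp
qed
lemma mmul_idm_r[simp]: "mmul C idm = C"
proof (intro ext)
  fix x y
  have "mmul C idm x y = (\<Sum>j\<in>UNIV. if j = y then C x j else 0)"
    unfolding mmul_def idm_def by (intro sum.cong) auto
  then show "mmul C idm x y = C x y" by simp
qed
lemma mmul_sum_l: "mmul (\<lambda>i j. \<Sum>n\<in>N. A n i j) C i j = (\<Sum>n\<in>N. mmul (A n) C i j)"
  by (simp add: mmul_def sum_distrib_right sum.swap[of _ N])
lemma mmul_sum_r: "mmul C (\<lambda>i j. \<Sum>n\<in>N. A n i j) i j = (\<Sum>n\<in>N. mmul C (A n) i j)"
  by (simp add: mmul_def sum_distrib_left sum.swap[of _ N])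

lemma mmul_nonneg: "nonneg A \<Longrightarrow> nonneg B \<Longrightarrow> nonneg (mmul A B)"
  by (simp add: nonneg_def mmul_def sum_nonneg)
lemma mmul_mono: "nonneg A \<Longrightarrow> nonneg B \<Longrightarrow> A \<le> A' \<Longrightarrow> B \<le> B' \<Longrightarrow> mmul A B \<le> mmul A' B'"
  unfolding nonneg_def mle_iff mmul_def
  by (auto intro!: sum_mono mult_mono order_trans[of 0 "A _ _" "A' _ _"])

lemma zm_app[simp]: "zm i j = 0" by (simp add: zm_def)
lemma mmul_zero_l[simp]: "mmul (\<lambda>i j. 0) C = (\<lambda>i j. 0)" by (simp add: mmul_def)
lemma mmul_zero_r[simp]: "mmul C (\<lambda>i j. 0) = (\<lambda>i j. 0)" by (simp add: mmul_def)
lemma nonneg_idm: "nonneg idm" by (simp add: nonneg_def idm_def)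
lemma nonneg_zm: "nonneg zm" by (simp add: nonneg_def)

fun ft :: "('s::finite \<Rightarrow> 's \<Rightarrow> real) \<Rightarrow> ('s \<Rightarrow> 's \<Rightarrow> real) \<Rightarrow> ('s \<Rightarrow> 's \<Rightarrow> real)
    \<Rightarrow> nat \<Rightarrow> int \<Rightarrow> int \<Rightarrow> 's \<Rightarrow> 's \<Rightarrow> real" where
  "ft Lm L0 Lp 0 a k = (if k = a \<and> 0 \<le> a then idm else zm)"
| "ft Lm L0 Lp (Suc n) a k = (if k < 0 then zm else
     (\<lambda>i j. mmul (ft Lm L0 Lp n a (k + 1)) Lm i j + mmul (ft Lm L0 Lp n a k) L0 i j
            + mmul (ft Lm L0 Lp n a (k - 1)) Lp i j))"

lemmas ft_Suc_fun = ft.simps(2)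
declare ft.simps(2)[simp del]

lemma ft_Suc_app: "ft Lm L0 Lp (Suc n) a k i j = (if k < 0 then 0 else
     mmul (ft Lm L0 Lp n a (k + 1)) Lm i j + mmul (ft Lm L0 Lp n a k) L0 i j
            + mmul (ft Lm L0 Lp n a (k - 1)) Lp i j)"
  by (simp add: ft_Suc_fun)

lemma ft_taboo: "qbd_taboo Lm L0 Lp n k i j = ft Lm L0 Lp n 0 k i j"
proof (induction n arbitrary: k i j)
  case 0 then show ?case by (simp add: idm_def)
next
  case (Suc n) then show ?case
    by (simp add: ft_Suc_app mmul_def sum.distrib)
qed

lemma ft_neg_a: "a < 0 \<Longrightarrow> ft Lm L0 Lp n a k = zm"
  by (induction n arbitrary: k) (auto simp: ft_Suc_fun zm_def)

lemma ft_neg_k: "k < 0 \<Longrightarrow> ft Lm L0 Lp n a k = zm"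
  by (cases n) (auto simp: ft_Suc_fun)

lemma ft_nonneg: "nonneg Lm \<Longrightarrow> nonneg L0 \<Longrightarrow> nonneg Lp \<Longrightarrow> nonneg (ft Lm L0 Lp n a k)"
proof (induction n arbitrary: k)
  case 0 then show ?case by (simp add: nonneg_idm nonneg_zm)
next
  case (Suc n)
  then show ?case
    using mmul_nonneg[of "ft Lm L0 Lp n a _" Lm] mmul_nonneg[of "ft Lm L0 Lp n a _" L0]
      mmul_nonneg[of "ft Lm L0 Lp n a _" Lp]
    by (auto simp: ft_Suc_fun nonneg_def intro!: add_nonneg_nonneg)
qed

lemma ft_back:
  assumes "0 \<le> a"
  shows "ft Lm L0 Lp (Suc n) a k = (\<lambda>i j. mmul Lm (ft Lm L0 Lp n (a - 1) k) i j
           + mmul L0 (ft Lm L0 Lp n a k) i j + mmul Lp (ft Lm L0 Lp n (a + 1) k) i j)"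
  using assms
proof (induction n arbitrary: k)
  case 0
  show ?case
  proof (intro ext)
    fix i j
    show "ft Lm L0 Lp (Suc 0) a k i j = mmul Lm (ft Lm L0 Lp 0 (a - 1) k) i j
           + mmul L0 (ft Lm L0 Lp 0 a k) i j + mmul Lp (ft Lm L0 Lp 0 (a + 1) k) i j"
      using 0 by (cases "k < 0"; cases "k = a - 1"; cases "k = a"; cases "k = a + 1"; simp add: ft_Suc_app)
  qed
next
  case (Suc n)
  define h where "h = ft Lm L0 Lp n"
  define g where "g = ft Lm L0 Lp (Suc n)"
  have IH: "\<And>k'. g a k' = (\<lambda>i j. mmul Lm (h (a - 1) k') i j
           + mmul L0 (h a k') i j + mmul Lp (h (a + 1) k') i j)"
    using Suc by (simp add: g_def h_def)
  show ?case
  proof (cases "k < 0")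
    case True
    then show ?thesis by (simp add: ft_Suc_fun zm_def)
  next
    case False
    have e1: "\<And>x. g x k = (\<lambda>i j. mmul (h x (k+1)) Lm i j + mmul (h x k) L0 i j + mmul (h x (k-1)) Lp i j)"
      using False by (simp add: ft_Suc_fun g_def h_def)
    show ?thesis
    proof (intro ext)
      fix i j
      have "ft Lm L0 Lp (Suc (Suc n)) a k i j = mmul (g a (k+1)) Lm i j + mmul (g a k) L0 i j + mmul (g a (k-1)) Lp i j"
        using False by (simp add: ft_Suc_app g_def)
      also have "\<dots> = mmul Lm (mmul (h (a-1) (k+1)) Lm) i j + mmul L0 (mmul (h a (k+1)) Lm) i j
          + mmul Lp (mmul (h (a+1) (k+1)) Lm) i j
          + (mmul Lm (mmul (h (a-1) k) L0) i j + mmul L0 (mmul (h a k) L0) i j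
          + mmul Lp (mmul (h (a+1) k) L0) i j)
          + (mmul Lm (mmul (h (a-1) (k-1)) Lp) i j + mmul L0 (mmul (h a (k-1)) Lp) i j
          + mmul Lp (mmul (h (a+1) (k-1)) Lp) i j)"
        by (simp only: IH) (simp add: mmul_assoc)
      also have "\<dots> = mmul Lm (g (a - 1) k) i j + mmul L0 (g a k) i j + mmul Lp (g (a + 1) k) i j"
        by (simp only: e1) (simp add: mmul_assoc)
      finally show "ft Lm L0 Lp (Suc (Suc n)) a k i j = mmul Lm (ft Lm L0 Lp (Suc n) (a - 1) k) i j +
         mmul L0 (ft Lm L0 Lp (Suc n) a k) i j + mmul Lp (ft Lm L0 Lp (Suc n) (a + 1) k) i j"
        by (simp add: g_def)
    qed
  qed
qed


definition FF :: "('s::finite \<Rightarrow> 's \<Rightarrow> real) \<Rightarrow> ('s \<Rightarrow> 's \<Rightarrow> real) \<Rightarrow> ('s \<Rightarrow> 's \<Rightarrow> real)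
    \<Rightarrow> nat \<Rightarrow> int \<Rightarrow> 's \<Rightarrow> 's \<Rightarrow> real" where
  "FF Lm L0 Lp N a = (if a = -1 then idm else if a < -1 then zm else
      (\<lambda>i j. \<Sum>n<N. mmul (ft Lm L0 Lp n a 0) Lm i j))"

lemma FF_0: "0 \<le> a \<Longrightarrow> FF Lm L0 Lp 0 a = zm"
  by (auto simp: FF_def zm_def)

lemma FF_rec:
  assumes a: "0 \<le> a"
  shows "FF Lm L0 Lp (Suc N) a = (\<lambda>i j. mmul Lm (FF Lm L0 Lp N (a - 1)) i j
     + mmul L0 (FF Lm L0 Lp N a) i j + mmul Lp (FF Lm L0 Lp N (a + 1)) i j)"
proof (intro ext)
  fix i j
  define f where "f = ft Lm L0 Lp"
  have "FF Lm L0 Lp (Suc N) a i j = mmul (f 0 a 0) Lm i j +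
     (\<Sum>n<N. mmul Lm (mmul (f n (a-1) 0) Lm) i j + mmul L0 (mmul (f n a 0) Lm) i j
        + mmul Lp (mmul (f n (a+1) 0) Lm) i j)"
    using a by (simp add: FF_def sum.lessThan_Suc_shift ft_back mmul_assoc f_def del: sum.lessThan_Suc)
  also have "\<dots> = mmul (f 0 a 0) Lm i j + (mmul Lm (\<lambda>i j. \<Sum>n<N. mmul (f n (a-1) 0) Lm i j) i j
     + mmul L0 (\<lambda>i j. \<Sum>n<N. mmul (f n a 0) Lm i j) i j
     + mmul Lp (\<lambda>i j. \<Sum>n<N. mmul (f n (a+1) 0) Lm i j) i j)"
    by (simp add: mmul_sum_r sum.distrib)
  also have "\<dots> = mmul Lm (FF Lm L0 Lp N (a - 1)) i j
     + mmul L0 (FF Lm L0 Lp N a) i j + mmul Lp (FF Lm L0 Lp N (a + 1)) i j"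
  proof (cases "a = 0")
    case True
    then show ?thesis by (simp add: FF_def f_def ft_neg_a)
  next
    case False
    then show ?thesis using a by (simp add: FF_def f_def)
  qed
  finally show "FF Lm L0 Lp (Suc N) a i j = mmul Lm (FF Lm L0 Lp N (a - 1)) i j
     + mmul L0 (FF Lm L0 Lp N a) i j + mmul Lp (FF Lm L0 Lp N (a + 1)) i j" .
qed

lemma FF_taboo: "FF Lm L0 Lp N 0 i j = (\<Sum>n<N. \<Sum>l\<in>UNIV. qbd_taboo Lm L0 Lp n 0 i l * Lm l j)"
  by (simp add: FF_def ft_taboo mmul_def)


lemma mmul_mono_l: "nonneg C \<Longrightarrow> A \<le> B \<Longrightarrow> mmul A C \<le> mmul B C"
  unfolding nonneg_def mle_iff mmul_def by (auto intro!: sum_mono mult_right_mono)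
lemma mmul_mono_r: "nonneg C \<Longrightarrow> A \<le> B \<Longrightarrow> mmul C A \<le> mmul C B"
  unfolding nonneg_def mle_iff mmul_def by (auto intro!: sum_mono mult_left_mono)
lemma mmul_mono_l': "nonneg C \<Longrightarrow> A \<le> B \<Longrightarrow> mmul A C i j \<le> mmul B C i j"
  using mmul_mono_l unfolding mle_iff by blast
lemma mmul_mono_r': "nonneg C \<Longrightarrow> A \<le> B \<Longrightarrow> mmul C A i j \<le> mmul C B i j"
  using mmul_mono_r unfolding mle_iff by blast

fun mpow :: "('s::finite \<Rightarrow> 's \<Rightarrow> real) \<Rightarrow> nat \<Rightarrow> 's \<Rightarrow> 's \<Rightarrow> real" where
  "mpow X 0 = idm"
| "mpow X (Suc n) = mmul X (mpow X n)"

lemma mpow_nonneg: "nonneg X \<Longrightarrow> nonneg (mpow X n)"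
  by (induction n) (auto simp: nonneg_idm mmul_nonneg)

definition super :: "('s::finite \<Rightarrow> 's \<Rightarrow> real) \<Rightarrow> ('s \<Rightarrow> 's \<Rightarrow> real) \<Rightarrow> ('s \<Rightarrow> 's \<Rightarrow> real)
    \<Rightarrow> ('s \<Rightarrow> 's \<Rightarrow> real) \<Rightarrow> bool" where
  "super Lm L0 Lp X \<longleftrightarrow> (\<lambda>i j. Lm i j + mmul L0 X i j + mmul Lp (mmul X X) i j) \<le> X"

definition qsol :: "('s::finite \<Rightarrow> 's \<Rightarrow> real) \<Rightarrow> ('s \<Rightarrow> 's \<Rightarrow> real) \<Rightarrow> ('s \<Rightarrow> 's \<Rightarrow> real)
    \<Rightarrow> ('s \<Rightarrow> 's \<Rightarrow> real) \<Rightarrow> bool" where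
  "qsol Lm L0 Lp X \<longleftrightarrow> X = (\<lambda>i j. Lm i j + mmul L0 X i j + mmul Lp (mmul X X) i j)"

lemma qsol_super: "qsol Lm L0 Lp X \<Longrightarrow> super Lm L0 Lp X"
  unfolding qsol_def super_def by simp

locale qbd =
  fixes Lm L0 Lp :: "'s::finite \<Rightarrow> 's \<Rightarrow> real"
  assumes nnm: "nonneg Lm" and nn0: "nonneg L0" and nnp: "nonneg Lp"
begin

abbreviation "F \<equiv> FF Lm L0 Lp"

lemma F_rec_app: "0 \<le> a \<Longrightarrow> F (Suc N) a i j = mmul Lm (F N (a - 1)) i j
     + mmul L0 (F N a) i j + mmul Lp (F N (a + 1)) i j"
  by (simp add: FF_rec)

lemma F_m1: "F N (-1) = idm" by (simp add: FF_def)

lemma F_nonneg: "nonneg (F N a)"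
  using mmul_nonneg[OF ft_nonneg[OF nnm nn0 nnp] nnm]
  by (auto simp: FF_def idm_def nonneg_def intro!: sum_nonneg)

lemma F_mono_Suc: "F N a \<le> F (Suc N) a"
  using mmul_nonneg[OF ft_nonneg[OF nnm nn0 nnp] nnm]
  by (auto simp: FF_def mle_iff nonneg_def)

lemma F_mono: "N \<le> M \<Longrightarrow> F N a \<le> F M a"
  using lift_Suc_mono_le[of "\<lambda>N. F N a"] F_mono_Suc by blast

lemma F_super:
  assumes X: "nonneg X" "super Lm L0 Lp X"
  shows "-1 \<le> a \<Longrightarrow> F N a \<le> mpow X (nat (a + 1))"
proof (induction N arbitrary: a)
  case 0
  then show ?case
    using mpow_nonneg[OF X(1)] by (cases "a = -1") (auto simp: FF_def mle_iff nonneg_def)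
next
  case (Suc N a)
  show ?case
  proof (cases "a = -1")
    case True then show ?thesis by (simp add: FF_def)
  next
    case False
    then have a: "0 \<le> a" using Suc.prems by simp
    have h1: "F N (a - 1) \<le> mpow X (nat a)" using Suc.IH[of "a - 1"] a by simp
    have h2: "F N a \<le> mpow X (Suc (nat a))" using Suc.IH[of "a"] a by (simp add: Suc_nat_eq_nat_zadd1 add.commute)
    have h3: "F N (a + 1) \<le> mpow X (Suc (Suc (nat a)))" using Suc.IH[of "a + 1"] a
      by (simp add: Suc_nat_eq_nat_zadd1 add.commute)
    have "nat (a + 1) = Suc (nat a)" using a by simp
    show ?thesis
      unfolding mle_iff
    proof (intro allI)
      fix i j
      have "F (Suc N) a i j = mmul Lm (F N (a - 1)) i j + mmul L0 (F N a) i j + mmul Lp (F N (a + 1)) i j"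
        using F_rec_app[OF a] by simp
      also have "\<dots> \<le> mmul Lm (mpow X (nat a)) i j + mmul L0 (mpow X (Suc (nat a))) i j
                    + mmul Lp (mpow X (Suc (Suc (nat a)))) i j"
        by (intro add_mono mmul_mono_r' nnm nn0 nnp h1 h2 h3)
      also have "\<dots> = mmul (\<lambda>i j. Lm i j + mmul L0 X i j + mmul Lp (mmul X X) i j) (mpow X (nat a)) i j"
        by (simp add: mmul_assoc)
      also have "\<dots> \<le> mmul X (mpow X (nat a)) i j"
        using X by (intro mmul_mono_l' mpow_nonneg) (auto simp: super_def)
      also have "\<dots> = mpow X (nat (a + 1)) i j"
        using \<open>nat (a + 1) = Suc (nat a)\<close> by simp
      finally show "F (Suc N) a i j \<le> mpow X (nat (a + 1)) i j" .
    qed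
  qed
qed

lemma F_sub:
  assumes b: "-1 \<le> b"
  shows "-1 \<le> a \<Longrightarrow> F N (a + b + 1) \<le> mmul (F N a) (F N b)"
proof (induction N arbitrary: a)
  case 0
  show ?case
  proof (cases "a = -1")
    case True then show ?thesis by (simp add: FF_def)
  next
    case False
    then have "0 \<le> a + b + 1" using 0 b by simp
    then show ?thesis using mmul_nonneg[OF F_nonneg F_nonneg, of 0 a 0 b]
      by (simp add: FF_0 mle_iff nonneg_def)
  qed
next
  case (Suc N a)
  show ?case
  proof (cases "a = -1")
    case True then show ?thesis by (simp add: FF_def)
  next
    case False
    then have a: "0 \<le> a" using Suc.prems by simp
    have ab: "0 \<le> a + b + 1" using a b by simp
    have e: "a + b + 1 - 1 = a + b" "a + b + 1 + 1 = a + b + 2" by simp_all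
    have h1: "F N (a + b) \<le> mmul (F N (a - 1)) (F N b)" using Suc.IH[of "a - 1"] a by simp
    have h2: "F N (a + b + 1) \<le> mmul (F N a) (F N b)" using Suc.IH[of "a"] a by simp
    have h3: "F N (a + b + 2) \<le> mmul (F N (a + 1)) (F N b)" using Suc.IH[of "a + 1"] a
      by (simp add: add.commute add.left_commute)
    show ?thesis
      unfolding mle_iff
    proof (intro allI)
      fix i j
      have "F (Suc N) (a + b + 1) i j = mmul Lm (F N (a + b)) i j + mmul L0 (F N (a + b + 1)) i j
           + mmul Lp (F N (a + b + 2)) i j"
        using F_rec_app[OF ab, unfolded e] by simp
      also have "\<dots> \<le> mmul Lm (mmul (F N (a - 1)) (F N b)) i j + mmul L0 (mmul (F N a) (F N b)) i j
           + mmul Lp (mmul (F N (a + 1)) (F N b)) i j"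
        by (intro add_mono mmul_mono_r' nnm nn0 nnp h1 h2 h3)
      also have "\<dots> = mmul (F (Suc N) a) (F N b) i j"
        using FF_rec[OF a, where Lm=Lm and ?L0.0=L0 and Lp=Lp] by (simp add: mmul_assoc)
      also have "\<dots> \<le> mmul (F (Suc N) a) (F (Suc N) b) i j"
        by (intro mmul_mono_r' F_nonneg F_mono_Suc)
      finally show "F (Suc N) (a + b + 1) i j \<le> mmul (F (Suc N) a) (F (Suc N) b) i j" .
    qed
  qed
qed

lemma F_supadd:
  assumes b: "-1 \<le> b"
  shows "-1 \<le> a \<Longrightarrow> mmul (F M a) (F N b) \<le> F (M + N) (a + b + 1)"
proof (induction M arbitrary: a)
  case 0
  show ?case
  proof (cases "a = -1")
    case True then show ?thesis by (simp add: FF_def)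
  next
    case False
    then have "0 \<le> a" using 0 by simp
    then show ?thesis using F_nonneg[of N "a + b + 1"]
      by (simp add: FF_0 mle_iff nonneg_def)
  qed
next
  case (Suc M a)
  show ?case
  proof (cases "a = -1")
    case True then show ?thesis using F_mono[of N "Suc M + N" b] by (simp add: FF_def)
  next
    case False
    then have a: "0 \<le> a" using Suc.prems by simp
    have ab: "0 \<le> a + b + 1" using a b by simp
    have e: "a + b + 1 - 1 = a + b" "a + b + 1 + 1 = a + b + 2" by simp_all
    have h1: "mmul (F M (a - 1)) (F N b) \<le> F (M + N) (a + b)" using Suc.IH[of "a - 1"] a by simp
    have h2: "mmul (F M a) (F N b) \<le> F (M + N) (a + b + 1)" using Suc.IH[of "a"] a by simp
    have h3: "mmul (F M (a + 1)) (F N b) \<le> F (M + N) (a + b + 2)" using Suc.IH[of "a + 1"] a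
      by (simp add: add.commute add.left_commute)
    show ?thesis
      unfolding mle_iff
    proof (intro allI)
      fix i j
      have "mmul (F (Suc M) a) (F N b) i j = mmul Lm (mmul (F M (a - 1)) (F N b)) i j
           + mmul L0 (mmul (F M a) (F N b)) i j + mmul Lp (mmul (F M (a + 1)) (F N b)) i j"
        using FF_rec[OF a, where Lm=Lm and ?L0.0=L0 and Lp=Lp] by (simp add: mmul_assoc)
      also have "\<dots> \<le> mmul Lm (F (M + N) (a + b)) i j + mmul L0 (F (M + N) (a + b + 1)) i j
           + mmul Lp (F (M + N) (a + b + 2)) i j"
        by (intro add_mono mmul_mono_r' nnm nn0 nnp h1 h2 h3)
      also have "\<dots> = F (Suc M + N) (a + b + 1) i j"
        using F_rec_app[OF ab, unfolded e, of "M + N"] by simp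
      finally show "mmul (F (Suc M) a) (F N b) i j \<le> F (Suc M + N) (a + b + 1) i j" .
    qed
  qed
qed

end


lemma mmul_tendsto:
  assumes "\<And>i j. (\<lambda>N. A N i j) \<longlonglongrightarrow> A' i j" "\<And>i j. (\<lambda>N. B N i j) \<longlonglongrightarrow> B' i j"
  shows "(\<lambda>N. mmul (A N) (B N) i j) \<longlonglongrightarrow> mmul A' B' i j"
  unfolding mmul_def by (intro tendsto_intros assms)

locale qbd_sup = qbd +
  fixes X0 :: "'a::finite \<Rightarrow> 'a \<Rightarrow> real"
  assumes X0: "nonneg X0" "super Lm L0 Lp X0"
begin

abbreviation "G \<equiv> qbd_G Lm L0 Lp"

definition "sG n i j = (\<Sum>l\<in>UNIV. qbd_taboo Lm L0 Lp n 0 i l * Lm l j)"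

lemma sG_nonneg: "0 \<le> sG n i j"
proof -
  have "sG n i j = mmul (ft Lm L0 Lp n 0 0) Lm i j" by (simp add: sG_def ft_taboo mmul_def)
  then show ?thesis using mmul_nonneg[OF ft_nonneg[OF nnm nn0 nnp] nnm] by (simp add: nonneg_def)
qed

lemma F0_eq: "F N 0 i j = (\<Sum>n<N. sG n i j)"
  by (simp add: FF_taboo sG_def)

lemma F_le_super: "nonneg Y \<Longrightarrow> super Lm L0 Lp Y \<Longrightarrow> F N 0 i j \<le> Y i j"
  using F_super[of Y 0 N] by (simp add: mle_iff)

lemma sG_summable: "summable (\<lambda>n. sG n i j)"
  by (rule summableI_nonneg_bounded[where x = "X0 i j"])
     (use sG_nonneg F_le_super[OF X0] in \<open>auto simp: F0_eq[symmetric]\<close>)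

lemma G_eq: "G i j = (\<Sum>n. sG n i j)"
  by (simp add: qbd_G_def sG_def)

lemma G_lim: "(\<lambda>N. F N 0 i j) \<longlonglongrightarrow> G i j"
  unfolding F0_eq G_eq by (rule summable_LIMSEQ[OF sG_summable])

lemma F_le_G: "F N 0 i j \<le> G i j"
  unfolding F0_eq G_eq by (rule sum_le_suminf[OF sG_summable]) (auto simp: sG_nonneg)

lemma F_le_G': "F N 0 \<le> G"
  using F_le_G by (simp add: mle_iff)

lemma G_nonneg: "nonneg G"
  unfolding nonneg_def G_eq using sG_summable sG_nonneg by (auto intro: suminf_nonneg)

lemma G_min: "nonneg Y \<Longrightarrow> super Lm L0 Lp Y \<Longrightarrow> G \<le> Y"
  unfolding mle_iff G_eq
  by (auto intro!: suminf_le_const[OF sG_summable] simp: F0_eq[symmetric] F_le_super)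

lemma G_sol: "qsol Lm L0 Lp G"
proof -
  define R where "R = (\<lambda>i j. Lm i j + mmul L0 G i j + mmul Lp (mmul G G) i j)"
  have "G \<le> R"
    unfolding mle_iff
  proof (intro allI)
    fix i j
    show "G i j \<le> R i j"
      unfolding G_eq
    proof (rule suminf_le_const[OF sG_summable])
      fix N
      show "sum (\<lambda>n. sG n i j) {..<N} \<le> R i j"
      proof (cases N)
        case 0
        then show ?thesis using mmul_nonneg[OF nn0 G_nonneg] mmul_nonneg[OF nnp mmul_nonneg[OF G_nonneg G_nonneg]] nnm
          by (simp add: R_def nonneg_def add_nonneg_nonneg)
      next
        case (Suc M)
        have "sum (\<lambda>n. sG n i j) {..<N} = F (Suc M) 0 i j" by (simp add: F0_eq Suc)
        also have "\<dots> = Lm i j + mmul L0 (F M 0) i j + mmul Lp (F M 1) i j"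
          using F_rec_app[of 0] by (simp add: F_m1)
        also have "\<dots> \<le> Lm i j + mmul L0 G i j + mmul Lp (mmul G G) i j"
        proof -
          have "F M 1 \<le> mmul (F M 0) (F M 0)" using F_sub[of 0 0 M] by simp
          also have "\<dots> \<le> mmul G G" by (intro mmul_mono F_nonneg F_le_G')
          finally have "F M 1 \<le> mmul G G" .
          then show ?thesis
            by (intro add_mono mmul_mono_r' nn0 nnp F_le_G') auto
        qed
        finally show ?thesis by (simp add: R_def)
      qed
    qed
  qed
  moreover have "R \<le> G"
    unfolding mle_iff
  proof (intro allI)
    fix i j
    have lim: "(\<lambda>N. Lm i j + mmul L0 (F N 0) i j + mmul Lp (mmul (F N 0) (F N 0)) i j) \<longlonglongrightarrow> R i j"
      unfolding R_def by (intro tendsto_intros mmul_tendsto G_lim)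
    show "R i j \<le> G i j"
    proof (rule LIMSEQ_le_const2[OF lim], intro exI allI impI)
      fix N
      have "Lm i j + mmul L0 (F N 0) i j + mmul Lp (mmul (F N 0) (F N 0)) i j
          \<le> Lm i j + mmul L0 (F (N + N) 0) i j + mmul Lp (F (N + N) 1) i j"
        using F_supadd[of 0 0 N N] F_mono[of N "N + N" 0]
        by (intro add_mono mmul_mono_r' nn0 nnp) auto
      also have "\<dots> = F (Suc (N + N)) 0 i j"
        using F_rec_app[of 0] by (simp add: F_m1)
      also have "\<dots> \<le> G i j" by (rule F_le_G)
      finally show "Lm i j + mmul L0 (F N 0) i j + mmul Lp (mmul (F N 0) (F N 0)) i j \<le> G i j" .
    qed
  qed
  ultimately show ?thesis unfolding qsol_def R_def by (rule antisym)
qed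

end


section \<open>Block matrices\<close>

lemma sum_UNIV_Plus: "(\<Sum>x\<in>(UNIV::('p::finite + 'm::finite) set). g x) = (\<Sum>a\<in>UNIV. g (Inl a)) + (\<Sum>b\<in>UNIV. g (Inr b))"
  using sum.Plus[of "UNIV::'p set" "UNIV::'m set" g] by (simp add: comp_def)

lemma blk_app[simp]:
  "blk A B C D (Inl i) (Inl j) = A i j" "blk A B C D (Inl i) (Inr k) = B i k"
  "blk A B C D (Inr k) (Inl j) = C k j" "blk A B C D (Inr k) (Inr l) = D k l"
  by (simp_all add: blk_def)

lemma blk_parts[simp]: "bpp (blk A B C D) = A" "bpm (blk A B C D) = B" "bmp (blk A B C D) = C" "bmm (blk A B C D) = D"
  by (simp_all add: bpp_def bpm_def bmp_def bmm_def)

lemma blk_decomp: "X = blk (bpp X) (bpm X) (bmp X) (bmm X)"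
  by (intro ext) (auto simp: blk_def bpp_def bpm_def bmp_def bmm_def split: sum.splits)

lemma fun_sum_eq: "(X::('p + 'm) \<Rightarrow> ('p + 'm) \<Rightarrow> real) = Y \<longleftrightarrow> bpp X = bpp Y \<and> bpm X = bpm Y \<and> bmp X = bmp Y \<and> bmm X = bmm Y"
proof
  assume h: "bpp X = bpp Y \<and> bpm X = bpm Y \<and> bmp X = bmp Y \<and> bmm X = bmm Y"
  show "X = Y"
  proof (intro ext)
    fix x y
    show "X x y = Y x y"
      using h by (cases x; cases y) (auto simp: bpp_def bpm_def bmp_def bmm_def fun_eq_iff)
  qed
qed simp

lemma blk_eq_iff: "blk A B C D = blk A' B' C' D' \<longleftrightarrow> A = A' \<and> B = B' \<and> C = C' \<and> D = D'"
  by (metis blk_parts)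

lemma blk_le_iff: "blk A B C D \<le> blk A' B' C' D' \<longleftrightarrow> A \<le> A' \<and> B \<le> B' \<and> C \<le> C' \<and> D \<le> D'"
  by (auto simp: mle_iff blk_def split: sum.splits)

lemma blk_nonneg_iff: "nonneg (blk A B C D) \<longleftrightarrow> nonneg A \<and> nonneg B \<and> nonneg C \<and> nonneg D"
  by (auto simp: nonneg_def blk_def split: sum.splits)

lemma mmul_blk: "mmul (blk A B C D) (blk E F G H) = blk (\<lambda>i j. mmul A E i j + mmul B G i j)
   (\<lambda>i j. mmul A F i j + mmul B H i j) (\<lambda>i j. mmul C E i j + mmul D G i j) (\<lambda>i j. mmul C F i j + mmul D H i j)"
  by (intro ext) (auto simp: mmul_def sum_UNIV_Plus blk_def split: sum.splits)

lemma blk_add: "(\<lambda>x y. blk A B C D x y + blk E F G H x y) = blk (\<lambda>i j. A i j + E i j) (\<lambda>i j. B i j + F i j)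
   (\<lambda>i j. C i j + G i j) (\<lambda>i j. D i j + H i j)"
  by (intro ext) (auto simp: blk_def split: sum.splits)

lemma idm_blk: "(idm :: ('p + 'm) \<Rightarrow> ('p + 'm) \<Rightarrow> real) = blk idm zm zm idm"
  by (intro ext) (auto simp: blk_def idm_def split: sum.splits)

lemma zm_blk: "(zm :: ('p + 'm) \<Rightarrow> ('p + 'm) \<Rightarrow> real) = blk zm zm zm zm"
  by (intro ext) (auto simp: blk_def split: sum.splits)

lemma qsol_blk: "qsol (blk A1 B1 C1 D1) (blk A2 B2 C2 D2) (blk A3 B3 C3 D3) (blk A B C D) \<longleftrightarrow>
  blk A B C D = (\<lambda>x y. blk A1 B1 C1 D1 x y + mmul (blk A2 B2 C2 D2) (blk A B C D) x y
     + mmul (blk A3 B3 C3 D3) (mmul (blk A B C D) (blk A B C D)) x y)"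
  by (simp add: qsol_def)

lemma blk_proj_add:
  "bpp (\<lambda>x y. F x y + G x y) = (\<lambda>i j. bpp F i j + bpp G i j)"
  "bpm (\<lambda>x y. F x y + G x y) = (\<lambda>i j. bpm F i j + bpm G i j)"
  "bmp (\<lambda>x y. F x y + G x y) = (\<lambda>i j. bmp F i j + bmp G i j)"
  "bmm (\<lambda>x y. F x y + G x y) = (\<lambda>i j. bmm F i j + bmm G i j)"
  by (simp_all add: bpp_def bpm_def bmp_def bmm_def)

lemma blk_proj_zm[simp]: "bpp zm = zm" "bpm zm = zm" "bmp zm = zm" "bmm zm = zm"
  by (simp_all add: bpp_def bpm_def bmp_def bmm_def zm_def)

lemma blk_le_decomp: "F \<le> blk A B C D \<longleftrightarrow> bpp F \<le> A \<and> bpm F \<le> B \<and> bmp F \<le> C \<and> bmm F \<le> D"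
proof
  assume "F \<le> blk A B C D"
  then show "bpp F \<le> A \<and> bpm F \<le> B \<and> bmp F \<le> C \<and> bmm F \<le> D"
    unfolding mle_iff bpp_def bpm_def bmp_def bmm_def
    by (metis blk_app(1) blk_app(2) blk_app(3) blk_app(4))
next
  assume h: "bpp F \<le> A \<and> bpm F \<le> B \<and> bmp F \<le> C \<and> bmm F \<le> D"
  show "F \<le> blk A B C D"
    unfolding mle_iff
  proof (intro allI)
    fix x y
    show "F x y \<le> blk A B C D x y"
      using h by (cases x; cases y) (auto simp: mle_iff bpp_def bpm_def bmp_def bmm_def)
  qed
qed

lemmas blk_simps = qsol_def fun_sum_eq mmul_blk blk_parts blk_proj_add

lemma mmul_mult_l[simp]: "mmul (\<lambda>i j. c * A i j) C i j = c * mmul A C i j"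
  by (simp add: mmul_def sum_distrib_left mult.assoc)
lemma mmul_mult_r[simp]: "mmul C (\<lambda>i j. c * A i j) i j = c * mmul C A i j"
  by (simp add: mmul_def sum_distrib_left mult.left_commute)

lemma mmul_zm_l'[simp]: "mmul zm C i j = 0" and mmul_zm_r'[simp]: "mmul C zm i j = 0"
  by simp_all


lemma part1_eqv:
  fixes X :: "('p::finite + 'm::finite) \<Rightarrow> ('p + 'm) \<Rightarrow> real"
  shows "qsol (blk zm (\<lambda>i j. Ppm i j / 2) zm Pmm) (blk (\<lambda>i j. Ppp i j / 2) zm Pmp zm)
     (blk (\<lambda>i j. idm i j / 2) zm zm zm) X \<longleftrightarrow>
   qsol (blk zm (\<lambda>i j. Ppm i j / 2) zm (\<lambda>i j. Pmm i j / 2))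
     (blk (\<lambda>i j. Ppp i j / 2) zm (\<lambda>i j. Pmp i j / 2) (\<lambda>i j. idm i j / 2))
     (blk (\<lambda>i j. idm i j / 2) zm zm zm) X"
proof -
  obtain A B C D where X: "X = blk A B C D" using blk_decomp by blast
  show ?thesis
    unfolding X qsol_def fun_sum_eq[of "blk A B C D"]
    by (simp add: bpp_def bpm_def bmp_def bmm_def mmul_blk fun_eq_iff) (auto simp: field_simps)
qed


locale setting =
  fixes T :: "('p::finite + 'm::finite) \<Rightarrow> ('p + 'm) \<Rightarrow> real"
    and Psi :: "'p \<Rightarrow> 'm \<Rightarrow> real"
    and mu :: real
  assumes gen: "is_generator T"
    and Psi: "is_min_nonneg_sol T Psi"
    and mu_pos: "0 < mu"
    and mu_ge: "\<forall>i. \<bar>T i i\<bar> \<le> mu"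
begin

definition "P = (\<lambda>i j. idm i j + T i j / mu)"
definition "V = (\<lambda>i j. idm i j + (bmm T i j + mmul (bmp T) Psi i j) / mu)"
definition "W = minv (\<lambda>i j. idm i j - bpp T i j / mu)"

lemma P_blocks:
  "bpp P = (\<lambda>i j. idm i j + bpp T i j / mu)" "bpm P = (\<lambda>i j. bpm T i j / mu)"
  "bmp P = (\<lambda>i j. bmp T i j / mu)" "bmm P = (\<lambda>i j. idm i j + bmm T i j / mu)"
  by (auto simp: P_def bpp_def bpm_def bmp_def bmm_def idm_def intro!: ext)

lemma P_nonneg: "nonneg P"
  unfolding nonneg_def P_def
proof (intro allI)
  fix i j
  show "0 \<le> idm i j + T i j / mu"
  proof (cases "i = j")
    case True
    have "- T i i \<le> mu" using mu_ge by (metis abs_le_D2)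
    then have "0 \<le> 1 + T i i / mu" using mu_pos by (simp add: field_simps)
    then show ?thesis using True by (simp add: idm_def)
  next
    case False
    then show ?thesis using gen mu_pos by (simp add: idm_def is_generator_def)
  qed
qed

lemma P_rowsum: "(\<Sum>j\<in>UNIV. P i j) = 1"
proof -
  have "(\<Sum>j\<in>UNIV. P i j) = (\<Sum>j\<in>UNIV. idm i j) + (\<Sum>j\<in>UNIV. T i j) / mu"
    by (simp add: P_def sum.distrib sum_divide_distrib)
  also have "\<dots> = 1" using gen by (simp add: is_generator_def idm_def)
  finally show ?thesis .
qed

lemma ric: "bpm T i j + mmul Psi (bmm T) i j + mmul (bpp T) Psi i j + mmul Psi (mmul (bmp T) Psi) i j = 0"
  using Psi by (simp add: is_min_nonneg_sol_def riccati_def mmul_assoc)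

lemma ric': "bpm T i j = - mmul Psi (bmm T) i j - mmul (bpp T) Psi i j - mmul Psi (mmul (bmp T) Psi) i j"
  using ric[of i j] by linarith

lemma Psi_nonneg: "nonneg Psi"
  using Psi by (simp add: is_min_nonneg_sol_def nonneg_def)

lemma Psi_min: "(\<And>i j. bpm T i j + mmul Y (bmm T) i j + mmul (bpp T) Y i j + mmul Y (mmul (bmp T) Y) i j = 0)
   \<Longrightarrow> nonneg Y \<Longrightarrow> Psi \<le> Y"
  using Psi by (simp add: is_min_nonneg_sol_def riccati_def mmul_assoc nonneg_def mle_iff)

abbreviation "L2m \<equiv> blk zm (\<lambda>i j. bpm P i j / 2) zm (\<lambda>i j. bmm P i j / 2)"
abbreviation "L20 \<equiv> blk (\<lambda>i j. bpp P i j / 2) zm (\<lambda>i j. bmp P i j / 2) (\<lambda>i j. idm i j / 2)"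
abbreviation "L2p \<equiv> blk (\<lambda>i j. idm i j / 2) zm zm zm"

abbreviation "Z \<equiv> blk zm Psi zm V"

lemma Z_sol2: "qsol L2m L20 L2p Z"
  apply (simp add: blk_simps fun_eq_iff P_blocks V_def)
  using mu_pos apply (simp add: field_simps ric')
  done


lemma Ppp_rowsum: "(\<Sum>a\<in>UNIV. bpp P i a) \<le> 1"
proof -
  have "(\<Sum>a\<in>UNIV. bpp P i a) \<le> (\<Sum>a\<in>UNIV. P (Inl i) (Inl a)) + (\<Sum>b\<in>UNIV. P (Inl i) (Inr b))"
    using P_nonneg by (simp add: bpp_def nonneg_def sum_nonneg)
  also have "\<dots> = 1" using P_rowsum[of "Inl i"] by (simp add: sum_UNIV_Plus)
  finally show ?thesis .
qed

definition "Q = (\<lambda>i j. bpp P i j / 2)"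

lemma Q_nonneg: "nonneg Q"
  using P_nonneg by (simp add: Q_def nonneg_def bpp_def)

lemma Q_rowsum: "(\<Sum>a\<in>UNIV. Q i a) \<le> 1/2"
  using Ppp_rowsum[of i] by (simp add: Q_def sum_divide_distrib[symmetric])

lemma Qpow_rowsum: "(\<Sum>j\<in>UNIV. mpow Q k i j) \<le> (1/2)^k"
proof (induction k arbitrary: i)
  case 0
  have "(\<Sum>j\<in>UNIV. idm i j) = (1::real)" by (simp add: idm_def)
  then show ?case by simp
next
  case (Suc k)
  have "(\<Sum>j\<in>UNIV. mpow Q (Suc k) i j) = (\<Sum>j\<in>UNIV. \<Sum>l\<in>UNIV. Q i l * mpow Q k l j)"
    by (simp add: mmul_def)
  also have "\<dots> = (\<Sum>l\<in>UNIV. \<Sum>j\<in>UNIV. Q i l * mpow Q k l j)"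
    by (rule sum.swap)
  also have "\<dots> = (\<Sum>l\<in>UNIV. Q i l * (\<Sum>j\<in>UNIV. mpow Q k l j))"
    by (simp add: sum_distrib_left)
  also have "\<dots> \<le> (\<Sum>l\<in>UNIV. Q i l * (1/2)^k)"
    using Q_nonneg Suc.IH by (intro sum_mono mult_left_mono) (auto simp: nonneg_def)
  also have "\<dots> = (\<Sum>l\<in>UNIV. Q i l) * (1/2)^k" by (simp add: sum_distrib_right)
  also have "\<dots> \<le> 1/2 * (1/2)^k"
    using Q_rowsum[of i] by (intro mult_right_mono) auto
  finally show ?case by simp
qed

lemma Qpow_le: "mpow Q k i j \<le> (1/2)^k"
proof -
  have "mpow Q k i j \<le> (\<Sum>j\<in>UNIV. mpow Q k i j)"
    using mpow_nonneg[OF Q_nonneg, of k] by (intro member_le_sum) (auto simp: nonneg_def)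
  then show ?thesis using Qpow_rowsum[of k i] by linarith
qed

lemma Qpow_ge: "0 \<le> mpow Q k i j"
  using mpow_nonneg[OF Q_nonneg, of k] by (auto simp: nonneg_def)

lemma Qpow_summable: "summable (\<lambda>k. mpow Q k i j)"
  by (rule summable_comparison_test'[OF summable_geometric[of "1/2::real"], of 0])
     (use Qpow_le Qpow_ge in auto)

lemma Qpow_lim: "(\<lambda>k. mpow Q k i j) \<longlonglongrightarrow> 0"
  by (rule tendsto_sandwich[of "\<lambda>_. 0" _ sequentially "\<lambda>k. (1/2::real)^k"])
     (auto simp: Qpow_le Qpow_ge LIMSEQ_power_zero)

lemma mpow_Suc': "mmul (mpow X k) X = mpow X (Suc k)"
  by (induction k) (simp_all add: mmul_assoc)

definition "S = (\<lambda>i j. (\<Sum>k. mpow Q k i j) / 2)"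

lemma sum_suminf_swap: "(\<And>l. summable (f l :: nat \<Rightarrow> real)) \<Longrightarrow> (\<Sum>l\<in>UNIV. c l * suminf (f l)) = (\<Sum>k. \<Sum>l\<in>UNIV. c l * f l k)"
proof -
  assume a: "\<And>l. summable (f l)"
  have "(\<Sum>k. \<Sum>l\<in>UNIV. c l * f l k) = (\<Sum>l\<in>UNIV. \<Sum>k. c l * f l k)"
    by (rule suminf_sum[of UNIV "\<lambda>l k. c l * f l k"]) (simp add: summable_mult a)
  also have "\<dots> = (\<Sum>l\<in>UNIV. c l * suminf (f l))" by (simp add: suminf_mult a)
  finally show ?thesis by simp
qed

lemma sum_suminf_swap2: "(\<And>l. summable (f l :: nat \<Rightarrow> real)) \<Longrightarrow> (\<Sum>l\<in>UNIV. suminf (f l) * c l) = (\<Sum>k. \<Sum>l\<in>UNIV. f l k * c l)"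
proof -
  assume a: "\<And>l. summable (f l)"
  have "(\<Sum>k. \<Sum>l\<in>UNIV. f l k * c l) = (\<Sum>l\<in>UNIV. \<Sum>k. f l k * c l)"
    by (rule suminf_sum[of UNIV "\<lambda>l k. f l k * c l"]) (simp add: summable_mult2 a)
  also have "\<dots> = (\<Sum>l\<in>UNIV. suminf (f l) * c l)" by (simp add: suminf_mult2 a)
  finally show ?thesis by simp
qed

definition "M = (\<lambda>i j. idm i j - bpp T i j / mu)"

lemma M_eq: "M = (\<lambda>i j. 2 * idm i j - 2 * Q i j)"
  using mu_pos by (auto simp: M_def Q_def P_blocks field_simps intro!: ext)


lemma MQ: "mmul M (mpow Q k) i j = 2 * (mpow Q k i j - mpow Q (Suc k) i j)"
  by (simp add: M_eq)

lemma QM: "mmul (mpow Q k) M i j = 2 * (mpow Q k i j - mpow Q (Suc k) i j)"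
  by (simp add: M_eq mpow_Suc'[symmetric] del: mpow.simps(2))

lemma Qdiff_summable: "summable (\<lambda>k. mpow Q k i j - mpow Q (Suc k) i j)"
proof -
  have "summable (\<lambda>k. mpow Q (Suc k) i j)"
    using summable_Suc_iff[of "\<lambda>k. mpow Q k i j"] Qpow_summable by blast
  then show ?thesis by (intro summable_diff Qpow_summable)
qed

lemma MS: "mmul M S = idm"
proof (intro ext)
  fix i j
  have "mmul M S i j = (\<Sum>l\<in>UNIV. M i l * (\<Sum>k. mpow Q k l j)) / 2"
    by (simp add: mmul_def S_def sum_divide_distrib)
  also have "\<dots> = (\<Sum>k. mmul M (mpow Q k) i j) / 2"
    by (subst sum_suminf_swap) (auto simp: Qpow_summable mmul_def)
  also have "\<dots> = (\<Sum>k. mpow Q k i j - mpow Q (Suc k) i j)"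
    by (simp only: MQ suminf_mult[OF Qdiff_summable])
  also have "\<dots> = idm i j"
    using sums_unique[OF telescope_sums'[OF Qpow_lim[of i j]]] by simp
  finally show "mmul M S i j = idm i j" .
qed


lemma SM: "mmul S M = idm"
proof (intro ext)
  fix i j
  have "mmul S M i j = (\<Sum>l\<in>UNIV. (\<Sum>k. mpow Q k i l) * M l j) / 2"
    by (simp add: mmul_def S_def sum_divide_distrib)
  also have "\<dots> = (\<Sum>k. mmul (mpow Q k) M i j) / 2"
    by (subst sum_suminf_swap2) (auto simp: Qpow_summable mmul_def)
  also have "\<dots> = (\<Sum>k. mpow Q k i j - mpow Q (Suc k) i j)"
    by (simp only: QM suminf_mult[OF Qdiff_summable])
  also have "\<dots> = idm i j"
    using sums_unique[OF telescope_sums'[OF Qpow_lim[of i j]]] by simp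
  finally show "mmul S M i j = idm i j" .
qed

lemma W_eq: "W = S"
  unfolding W_def M_def[symmetric] minv_def
proof (rule the_equality)
  show "mmul M S = idm \<and> mmul S M = idm" using MS SM by simp
  fix X assume X: "mmul M X = idm \<and> mmul X M = idm"
  have "X = mmul X (mmul M S)" using MS by simp
  also have "\<dots> = mmul (mmul X M) S" by (simp add: mmul_assoc)
  also have "\<dots> = S" using X by simp
  finally show "X = S" .
qed

lemma W_nonneg: "nonneg W"
  unfolding W_eq S_def nonneg_def using Qpow_summable Qpow_ge by (auto intro!: suminf_nonneg)

lemma MW: "mmul M W = idm" using MS W_eq by simp
lemma WM: "mmul W M = idm" using SM W_eq by simp


lemma V_P: "V = (\<lambda>i j. bmm P i j + mmul (bmp P) Psi i j)"
  by (auto simp: V_def P_blocks add_divide_distrib intro!: ext)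

lemma V_nonneg: "nonneg V"
proof -
  have "nonneg (bmm P)" "nonneg (bmp P)" using P_nonneg by (auto simp: nonneg_def bmm_def bmp_def)
  then show ?thesis unfolding V_P
    using mmul_nonneg[OF \<open>nonneg (bmp P)\<close> Psi_nonneg] by (auto simp: nonneg_def)
qed

lemma MPsi: "mmul M Psi i j = bpm P i j + mmul Psi V i j"
  using mu_pos by (simp add: M_def P_blocks V_def ric' field_simps)

abbreviation "L1m \<equiv> blk zm (\<lambda>i j. bpm P i j / 2) zm (bmm P)"
abbreviation "L10 \<equiv> blk (\<lambda>i j. bpp P i j / 2) zm (bmp P) zm"
abbreviation "L3m \<equiv> blk zm (mmul W (bpm P)) zm V"
abbreviation "L3p \<equiv> blk W zm zm zm"

lemma P_parts_nonneg: "nonneg (bpp P)" "nonneg (bpm P)" "nonneg (bmp P)" "nonneg (bmm P)"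
  using P_nonneg by (auto simp: nonneg_def bpp_def bpm_def bmp_def bmm_def)

lemma half_nonneg: "nonneg A \<Longrightarrow> nonneg (\<lambda>i j. A i j / 2)"
  by (simp add: nonneg_def)

lemma Z_nonneg: "nonneg Z"
  by (simp add: blk_nonneg_iff nonneg_zm Psi_nonneg V_nonneg)

lemma Z_sol1: "qsol L1m L10 L2p Z"
  using part1_eqv Z_sol2 by blast

lemma Z_sol3: "qsol L3m zm L3p Z"
proof -
  have "Psi i j = mmul W (bpm P) i j + mmul W (mmul Psi V) i j" for i j
  proof -
    have "Psi i j = mmul W (mmul M Psi) i j" by (simp add: mmul_assoc[symmetric] WM)
    also have "\<dots> = mmul W (\<lambda>i j. bpm P i j + mmul Psi V i j) i j" by (simp add: MPsi[abs_def])
    finally show ?thesis by simp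
  qed
  then show ?thesis by (simp add: blk_simps fun_eq_iff)
qed

lemma nn1: "nonneg L1m" "nonneg L10" "nonneg L2p"
  by (simp_all add: blk_nonneg_iff nonneg_zm half_nonneg P_parts_nonneg nonneg_idm)
lemma nn2: "nonneg L2m" "nonneg L20"
  by (simp_all add: blk_nonneg_iff nonneg_zm half_nonneg P_parts_nonneg nonneg_idm)
lemma nn3: "nonneg L3m" "nonneg L3p"
  by (simp_all add: blk_nonneg_iff nonneg_zm W_nonneg V_nonneg mmul_nonneg P_parts_nonneg)

lemma nonneg_le_zm: "nonneg A \<Longrightarrow> A \<le> zm \<Longrightarrow> A = zm"
  by (auto simp: nonneg_def mle_iff intro!: ext antisym)

lemma main:
  "qbd_G L1m L10 L2p = qbd_G L2m L20 L2p \<and> qbd_G L2m L20 L2p = qbd_G L3m zm L3p"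
proof -
  interpret q1: qbd_sup L1m L10 L2p Z
    by unfold_locales (simp_all add: nn1 Z_nonneg qsol_super Z_sol1)
  interpret q2: qbd_sup L2m L20 L2p Z
    by unfold_locales (simp_all add: nn1 nn2 Z_nonneg qsol_super Z_sol2)
  interpret q3: qbd_sup L3m zm L3p Z
    by unfold_locales (simp_all add: nn3 nonneg_zm Z_nonneg qsol_super Z_sol3)
  have e12: "q1.G = q2.G"
  proof (rule antisym)
    show "q1.G \<le> q2.G"
      using q2.G_sol part1_eqv by (intro q1.G_min q2.G_nonneg qsol_super) blast
    show "q2.G \<le> q1.G"
      using q1.G_sol part1_eqv by (intro q2.G_min q1.G_nonneg qsol_super) blast
  qed
  have g2le: "q2.G \<le> Z" by (intro q2.G_min Z_nonneg qsol_super Z_sol2)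
  obtain A B C D where g2: "q2.G = blk A B C D" using blk_decomp by blast
  have "nonneg (blk A B C D)" using q2.G_nonneg g2 by simp
  then have nn: "nonneg A" "nonneg B" "nonneg C" "nonneg D" by (simp_all add: blk_nonneg_iff)
  have le: "A \<le> zm" "B \<le> Psi" "C \<le> zm" "D \<le> V" using g2le g2 by (simp_all add: blk_le_iff)
  have AC: "A = zm" "C = zm" using nn le nonneg_le_zm by blast+
  have sol: "qsol L2m L20 L2p (blk zm B zm D)" using q2.G_sol g2 AC by simp
  have solB: "B = bpm (\<lambda>x y. L2m x y + mmul L20 (blk zm B zm D) x y + mmul L2p (mmul (blk zm B zm D) (blk zm B zm D)) x y)"
    using sol unfolding qsol_def by (metis blk_parts(2))
  have solD: "D = bmm (\<lambda>x y. L2m x y + mmul L20 (blk zm B zm D) x y + mmul L2p (mmul (blk zm B zm D) (blk zm B zm D)) x y)"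
    using sol unfolding qsol_def by (metis blk_parts(4))
  have eqD: "D = (\<lambda>i j. bmm P i j + mmul (bmp P) B i j)"
    using solD by (simp add: blk_simps fun_eq_iff) (simp add: field_simps)
  have eqB: "B i j = bpm P i j / 2 + mmul (bpp P) B i j / 2 + mmul B D i j / 2" for i j
    using solB by (simp add: blk_simps fun_eq_iff)
  have ricB: "bpm T i j + mmul B (bmm T) i j + mmul (bpp T) B i j + mmul B (mmul (bmp T) B) i j = 0" for i j
  proof -
    have h: "B i j = bpm T i j / mu / 2 + (B i j + mmul (bpp T) B i j / mu) / 2
      + (B i j + (mmul B (bmm T) i j + mmul B (mmul (bmp T) B) i j) / mu) / 2"
      using eqB[of i j] by (simp add: eqD P_blocks add_divide_distrib)
    have "(bpm T i j + mmul B (bmm T) i j + mmul (bpp T) B i j + mmul B (mmul (bmp T) B) i j) / mu = 0"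
      using h by (simp add: add_divide_distrib)
    then show ?thesis using mu_pos by simp
  qed
  have PsiB: "Psi \<le> B" by (rule Psi_min[OF ricB nn(2)])
  have BPsi: "B = Psi" using PsiB le(2) by (rule antisym[rotated])
  have DV: "D = V" using eqD BPsi V_P by simp
  have g2Z: "q2.G = Z" using g2 AC BPsi DV by simp
  have g3le: "q3.G \<le> Z" by (intro q3.G_min Z_nonneg qsol_super Z_sol3)
  obtain A3 B3 C3 D3 where g3: "q3.G = blk A3 B3 C3 D3" using blk_decomp by blast
  have "nonneg (blk A3 B3 C3 D3)" using q3.G_nonneg g3 by simp
  then have nn3: "nonneg A3" "nonneg B3" "nonneg C3" "nonneg D3" by (simp_all add: blk_nonneg_iff)
  have le3: "A3 \<le> zm" "B3 \<le> Psi" "C3 \<le> zm" "D3 \<le> V" using g3le g3 by (simp_all add: blk_le_iff)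
  have AC3: "A3 = zm" "C3 = zm" using nn3 le3 nonneg_le_zm by blast+
  have sol3: "qsol L3m zm L3p (blk zm B3 zm D3)" using q3.G_sol g3 AC3 by simp
  have solB3: "B3 = bpm (\<lambda>x y. L3m x y + mmul zm (blk zm B3 zm D3) x y + mmul L3p (mmul (blk zm B3 zm D3) (blk zm B3 zm D3)) x y)"
    using sol3 unfolding qsol_def by (metis blk_parts(2))
  have solD3: "D3 = bmm (\<lambda>x y. L3m x y + mmul zm (blk zm B3 zm D3) x y + mmul L3p (mmul (blk zm B3 zm D3) (blk zm B3 zm D3)) x y)"
    using sol3 unfolding qsol_def by (metis blk_parts(4))
  have D3V: "D3 = V" using solD3 by (simp add: blk_simps)
  have eqB3: "B3 = mmul W (\<lambda>i j. bpm P i j + mmul B3 V i j)"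
    using solB3 D3V by (simp add: blk_simps fun_eq_iff)
  have MB3: "mmul M B3 i j = bpm P i j + mmul B3 V i j" for i j
  proof -
    have "mmul M B3 = mmul (mmul M W) (\<lambda>i j. bpm P i j + mmul B3 V i j)"
      by (subst eqB3) (simp add: mmul_assoc)
    then show ?thesis by (simp add: MW)
  qed
  have PB3: "mmul (bpp P) B3 i j = 2 * B3 i j - mmul M B3 i j" for i j
    by (simp add: P_blocks M_def)
  have superX: "super L2m L20 L2p (blk zm B3 zm V)"
  proof -
    have i1: "bpm P i j / 2 + mmul (bpp P) B3 i j / 2 + mmul B3 V i j / 2 \<le> B3 i j" for i j
      by (simp add: PB3 MB3 field_simps)
    have "mmul (bmp P) B3 \<le> mmul (bmp P) Psi" by (intro mmul_mono_r P_parts_nonneg le3)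
    then have i2': "mmul (bmp P) B3 i j \<le> mmul (bmp P) Psi i j" for i j
      unfolding mle_iff by blast
    have i2: "bmm P i j / 2 + (mmul (bmp P) B3 i j / 2 + V i j / 2) \<le> V i j" for i j
      using i2'[of i j] by (simp add: V_P field_simps)
    show ?thesis
      unfolding super_def blk_le_decomp using i1 i2
      by (simp add: blk_proj_add mmul_blk mle_iff)
  qed
  have "q2.G \<le> blk zm B3 zm V"
    by (intro q2.G_min superX) (simp add: blk_nonneg_iff nonneg_zm nn3 V_nonneg)
  then have "Psi \<le> B3" using g2Z by (simp add: blk_le_iff)
  then have "B3 = Psi" using le3(2) by (simp add: antisym)
  then have g3Z: "q3.G = Z" using g3 AC3 D3V by simp
  show ?thesis using e12 g2Z g3Z by simp
qed

end

theorem theorem4: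
  fixes T :: "('p::finite + 'm::finite) \<Rightarrow> ('p + 'm) \<Rightarrow> real"
    and Psi :: "'p \<Rightarrow> 'm \<Rightarrow> real"
    and mu :: real
  assumes gen: "is_generator T"
    and Psi: "is_min_nonneg_sol T Psi"
    and mu_pos: "0 < mu"
    and mu_ge: "\<forall>i. \<bar>T i i\<bar> \<le> mu"
  defines "P \<equiv> (\<lambda>i j. idm i j + T i j / mu)"
    and "V \<equiv> (\<lambda>i j. idm i j + (bmm T i j + mmul (bmp T) Psi i j) / mu)"
    and "W \<equiv> minv (\<lambda>i j. idm i j - bpp T i j / mu)"
  shows "qbd_G (blk zm (\<lambda>i j. bpm P i j / 2) zm (bmm P))
               (blk (\<lambda>i j. bpp P i j / 2) zm (bmp P) zm)
               (blk (\<lambda>i j. idm i j / 2) zm zm zm)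
       = qbd_G (blk zm (\<lambda>i j. bpm P i j / 2) zm (\<lambda>i j. bmm P i j / 2))
               (blk (\<lambda>i j. bpp P i j / 2) zm (\<lambda>i j. bmp P i j / 2) (\<lambda>i j. idm i j / 2))
               (blk (\<lambda>i j. idm i j / 2) zm zm zm)
     \<and> qbd_G (blk zm (\<lambda>i j. bpm P i j / 2) zm (\<lambda>i j. bmm P i j / 2))
               (blk (\<lambda>i j. bpp P i j / 2) zm (\<lambda>i j. bmp P i j / 2) (\<lambda>i j. idm i j / 2))
               (blk (\<lambda>i j. idm i j / 2) zm zm zm)
       = qbd_G (blk zm (mmul W (bpm P)) zm V)
               zm
               (blk W zm zm zm)"
proof -
  interpret s: setting T Psi mu
    by unfold_locales (rule gen Psi mu_pos mu_ge)+
  have "P = s.P" by (simp add: P_def s.P_def)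
  moreover have "V = s.V" by (simp add: V_def s.V_def)
  moreover have "W = s.W" by (simp add: W_def s.W_def)
  ultimately show ?thesis using s.main by (simp only:)
qed

end
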